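(* For every $r\geq 2$ there is a constant $C=C(r)>0$ such that the following holds. Let $H$ be an $r$-uniform hypergraph on $n$ vertices of average degree $d$, and let $p>0$. Then $$n^{r/p}\cdot\lambda_2^{(p)}(H)\geq r\,\mathrm{disc}^{+}(H)-Cd\qquad\text{and}\qquad n^{r/p}\cdot\mu^{(p)}(H)\geq r\,\mathrm{disc}(H)-Cd.$$
   Context: For an $r$-uniform hypergraph $H$ on vertex set $V$ with $|V|=n$, its adjacency map is $\tau_H(x_1,\dots,x_r)=\frac{1}{(r-1)!}\sum x_1(v_1)\cdots x_r(v_r)$, the sum over ordered tuples $(v_1,\dots,v_r)\in V^r$ with $\{v_1,\dots,v_r\}\in E(H)$. The normalized adjacency map is $\sigma_H=\tau_H-\frac{r|E(H)|}{n^r}J$ with $J(x_1,\dots,x_r)=\sum_{v_1,\dots,v_r\in V}x_1(v_1)\cdots x_r(v_r)$. With $\|x\|_p=(\sum_v|x(v)|^p)^{1/p}$, $\lambda_2^{(p)}(H)=\sup_{x\in\mathbb{R}^V,\|x\|_p=1}\sigma_H(x,\dots,x)$ and $\mu^{(p)}(H)=\sup_{\|x_1\|_p=\dots=\|x_r\|_p=1}|\sigma_H(x_1,\dots,x_r)|$. With edge density $q=|E(H)|/\binom{n}{r}$ and $e(U)$ the number of edges inside $U\subset V$, $\mathrm{disc}(U)=e(U)-q\binom{|U|}{r}$, $\mathrm{disc}^{+}(H)=\max_U\mathrm{disc}(U)$, $\mathrm{disc}(H)=\max_U|\mathrm{disc}(U)|$. The average degree is $d=r|E(H)|/n$. *)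

theory Defs
  imports "HOL-Analysis.Analysis"
begin

text \<open>An r-uniform hypergraph: a finite vertex set V and a set E of edges,
  each edge an r-element subset of V. Vertices are natural numbers
  (any finite vertex set can be relabelled).\<close>
definition uniform_hypergraph :: "nat \<Rightarrow> nat set \<Rightarrow> nat set set \<Rightarrow> bool" where
  "uniform_hypergraph r V E \<longleftrightarrow> finite V \<and> (\<forall>e\<in>E. e \<subseteq> V \<and> card e = r)"

definition tuples :: "nat \<Rightarrow> nat set \<Rightarrow> (nat \<Rightarrow> nat) set" where
  "tuples r V = PiE {..<r} (\<lambda>_. V)"

text \<open>Adjacency map tau_H(x_1,...,x_r); the arguments are xs 0, ..., xs (r-1).\<close>
definition adj_map :: "nat \<Rightarrow> nat set \<Rightarrow> nat set set \<Rightarrow> (nat \<Rightarrow> nat \<Rightarrow> real) \<Rightarrow> real" where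
  "adj_map r V E xs = (1 / fact (r - 1)) *
     (\<Sum>v\<in>{v\<in>tuples r V. v ` {..<r} \<in> E}. \<Prod>i<r. xs i (v i))"

definition J_map :: "nat \<Rightarrow> nat set \<Rightarrow> (nat \<Rightarrow> nat \<Rightarrow> real) \<Rightarrow> real" where
  "J_map r V xs = (\<Sum>v\<in>tuples r V. \<Prod>i<r. xs i (v i))"

definition norm_adj_map :: "nat \<Rightarrow> nat set \<Rightarrow> nat set set \<Rightarrow> (nat \<Rightarrow> nat \<Rightarrow> real) \<Rightarrow> real" where
  "norm_adj_map r V E xs = adj_map r V E xs
     - (real r * real (card E) / real (card V) ^ r) * J_map r V xs"

definition pnorm :: "real \<Rightarrow> nat set \<Rightarrow> (nat \<Rightarrow> real) \<Rightarrow> real" where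
  "pnorm p V x = (\<Sum>v\<in>V. \<bar>x v\<bar> powr p) powr (1 / p)"

definition lambda2 :: "real \<Rightarrow> nat \<Rightarrow> nat set \<Rightarrow> nat set set \<Rightarrow> real" where
  "lambda2 p r V E = (SUP x\<in>{x. pnorm p V x = 1}. norm_adj_map r V E (\<lambda>_. x))"

definition mu :: "real \<Rightarrow> nat \<Rightarrow> nat set \<Rightarrow> nat set set \<Rightarrow> real" where
  "mu p r V E = (SUP xs\<in>{xs. \<forall>i<r. pnorm p V (xs i) = 1}. \<bar>norm_adj_map r V E xs\<bar>)"

definition edge_density :: "nat \<Rightarrow> nat set \<Rightarrow> nat set set \<Rightarrow> real" where
  "edge_density r V E = real (card E) / real (card V choose r)"

definition edges_in :: "nat set set \<Rightarrow> nat set \<Rightarrow> nat" where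
  "edges_in E U = card {e\<in>E. e \<subseteq> U}"

definition disc_set :: "nat \<Rightarrow> nat set \<Rightarrow> nat set set \<Rightarrow> nat set \<Rightarrow> real" where
  "disc_set r V E U = real (edges_in E U) - edge_density r V E * real (card U choose r)"

definition disc_plus :: "nat \<Rightarrow> nat set \<Rightarrow> nat set set \<Rightarrow> real" where
  "disc_plus r V E = Max (disc_set r V E ` Pow V)"

definition disc :: "nat \<Rightarrow> nat set \<Rightarrow> nat set set \<Rightarrow> real" where
  "disc r V E = Max ((\<lambda>U. \<bar>disc_set r V E U\<bar>) ` Pow V)"

definition avg_degree :: "nat \<Rightarrow> nat set \<Rightarrow> nat set set \<Rightarrow> real" where
  "avg_degree r V E = real r * real (card E) / real (card V)"

end

theory Submission
  imports Defs "HOL-Combinatorics.Multiset_Permutations"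
begin


definition PP :: "nat \<Rightarrow> nat \<Rightarrow> real" where
  "PP r u = (\<Prod>i<r. real u - real i)"

lemma PP_Suc: "PP (Suc r) u = PP r u * (real u - real r)"
  by (simp add: PP_def)

lemma PP_choose: "PP r u = fact r * real (u choose r)"
  by (simp add: PP_def binomial_gbinomial gbinomial_mult_fact atLeast0LessThan)

lemma PP_nonneg: "0 \<le> PP r u"
proof (cases "r \<le> u")
  case True then show ?thesis unfolding PP_def by (intro prod_nonneg) auto
next
  case False then have "u \<in> {..<r}" by auto
  then show ?thesis unfolding PP_def by (subst prod_zero) auto
qed

lemma PP_le: "PP r u \<le> real u ^ r"
proof (cases "r \<le> u")
  case True
  have "PP r u \<le> (\<Prod>i<r. real u)" unfolding PP_def by (intro prod_mono) (use True in auto)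
  then show ?thesis by simp
next
  case False then have "u \<in> {..<r}" by auto
  then have "PP r u = 0" unfolding PP_def by (subst prod_zero) auto
  then show ?thesis by simp
qed

lemma PP_pos: "r \<le> n \<Longrightarrow> 0 < PP r n"
  unfolding PP_def by (intro prod_pos) auto

lemma PP_gap: "u \<le> n \<Longrightarrow> real n * (real u ^ r - PP r u) \<le> real r * real r * real n ^ r"
proof (induction r)
  case 0 then show ?case by (simp add: PP_def)
next
  case (Suc r)
  have IH: "real n * (real u ^ r - PP r u) \<le> real r * real r * real n ^ r" using Suc by auto
  have a: "real u ^ r \<le> real n ^ r" using Suc.prems by (simp add: power_mono)
  have b: "PP r u \<le> real u ^ r" by (rule PP_le)
  have c: "0 \<le> PP r u" by (rule PP_nonneg)
  have un: "real u \<le> real n" using Suc.prems by simp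
  have "real n * (real u ^ Suc r - PP (Suc r) u)
      = real u * (real n * (real u ^ r - PP r u)) + real r * real n * PP r u"
    by (simp add: PP_Suc algebra_simps)
  also have "\<dots> \<le> real n * (real r * real r * real n ^ r) + real r * real n * real n ^ r"
  proof (rule add_mono)
    have X0: "0 \<le> real n * (real u ^ r - PP r u)" using b by simp
    have "real u * (real n * (real u ^ r - PP r u)) \<le> real n * (real n * (real u ^ r - PP r u))"
      by (rule mult_right_mono[OF un X0])
    also have "\<dots> \<le> real n * (real r * real r * real n ^ r)" using IH by (simp add: mult_left_mono)
    finally show "real u * (real n * (real u ^ r - PP r u)) \<le> real n * (real r * real r * real n ^ r)" .
    show "real r * real n * PP r u \<le> real r * real n * real n ^ r"
      using a b by (intro mult_left_mono) auto
  qed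
  also have "\<dots> \<le> real (Suc r) * real (Suc r) * real n ^ Suc r"
    by (simp add: algebra_simps)
  finally show ?case .
qed

lemma PP_ratio: "u \<le> n \<Longrightarrow> PP r u * real n ^ r \<le> real u ^ r * PP r n"
proof (induction r)
  case 0 then show ?case by (simp add: PP_def)
next
  case (Suc r)
  show ?case
  proof (cases "r \<le> u")
    case False
    then have "u \<in> {..<Suc r}" by auto
    then have "PP (Suc r) u = 0" unfolding PP_def by (subst prod_zero) auto
    moreover have "0 \<le> PP (Suc r) n" by (rule PP_nonneg)
    ultimately show ?thesis by simp
  next
    case True
    have IH: "PP r u * real n ^ r \<le> real u ^ r * PP r n" using Suc by auto
    have d: "0 \<le> (real u - real r) * real n" using True by simp
    have e0: "real r * real u \<le> real r * real n" using Suc.prems by (intro mult_left_mono) auto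
    have e: "(real u - real r) * real n \<le> real u * (real n - real r)" using e0
      by (simp add: algebra_simps)
    have f: "0 \<le> real u ^ r * PP r n" by (simp add: PP_nonneg)
    have "PP (Suc r) u * real n ^ Suc r = (PP r u * real n ^ r) * ((real u - real r) * real n)"
      by (simp add: PP_Suc algebra_simps)
    also have "\<dots> \<le> (real u ^ r * PP r n) * ((real u - real r) * real n)"
      using IH d by (rule mult_right_mono)
    also have "\<dots> \<le> (real u ^ r * PP r n) * (real u * (real n - real r))"
      using e f by (rule mult_left_mono)
    also have "\<dots> = real u ^ Suc r * PP (Suc r) n" by (simp add: PP_Suc algebra_simps)
    finally show ?thesis .
  qed
qed

lemma binom_ratio:
  assumes "1 \<le> r" "r \<le> n" "u \<le> n"
  shows "\<bar>real (u choose r) / real (n choose r) - real u ^ r / real n ^ r\<bar> \<le> real r * real r / real n"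
proof -
  have fr: "(0::real) < fact r" by simp
  have q: "real (u choose r) / real (n choose r) = PP r u / PP r n"
    using fr by (simp add: PP_choose)
  have pn: "0 < PP r n" using assms by (simp add: PP_pos)
  have n0: "0 < real n" using assms by simp
  have nr: "0 < real n ^ r" using n0 by simp
  have pnle: "PP r n \<le> real n ^ r" by (rule PP_le)
  have up: "PP r u / PP r n \<le> real u ^ r / real n ^ r"
    using PP_ratio[OF assms(3), of r] pn nr by (simp add: divide_simps mult.commute)
  have "real u ^ r / real n ^ r - PP r u / PP r n \<le> real u ^ r / real n ^ r - PP r u / real n ^ r"
    using pnle pn nr PP_nonneg[of r u] by (intro diff_left_mono divide_left_mono) auto
  also have "\<dots> = (real n * (real u ^ r - PP r u)) / (real n * real n ^ r)"
    using n0 by (simp add: field_simps)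
  also have "\<dots> \<le> (real r * real r * real n ^ r) / (real n * real n ^ r)"
    using PP_gap[OF assms(3), of r] n0 nr by (intro divide_right_mono) auto
  also have "\<dots> = real r * real r / real n" using nr by simp
  finally have lo: "real u ^ r / real n ^ r - PP r u / PP r n \<le> real r * real r / real n" .
  have "0 \<le> real r * real r / real n" by simp
  then show ?thesis using up lo q by (simp add: abs_le_iff)
qed


lemma card_tuples_onto:
  assumes "e \<subseteq> V" "card e = r" "finite V"
  shows "card {v\<in>tuples r V. v`{..<r} = e} = fact r"
proof -
  let ?B = "{v\<in>tuples r V. v`{..<r} = e}"
  have fe: "finite e" using assms finite_subset by auto
  have inj: "inj_on (\<lambda>v. map v [0..<r]) ?B"
  proof (rule inj_onI)
    fix v w assume v: "v \<in> ?B" and w: "w \<in> ?B" and eq: "map v [0..<r] = map w [0..<r]"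
    show "v = w"
    proof
      fix i show "v i = w i"
      proof (cases "i < r")
        case True
        show ?thesis using eq True by simp
      next
        case False then show ?thesis using v w by (auto simp: tuples_def PiE_def extensional_def)
      qed
    qed
  qed
  have img: "(\<lambda>v. map v [0..<r]) ` ?B = permutations_of_set e"
  proof
    show "(\<lambda>v. map v [0..<r]) ` ?B \<subseteq> permutations_of_set e"
    proof
      fix xs assume "xs \<in> (\<lambda>v. map v [0..<r]) ` ?B"
      then obtain v where v: "v \<in> ?B" and xs: "xs = map v [0..<r]" by auto
      have "set xs = e" using v xs by (auto simp: lessThan_atLeast0)
      moreover have "inj_on v {..<r}"
        using v assms fe by (intro eq_card_imp_inj_on) auto
      then have "distinct xs" using xs by (simp add: distinct_map lessThan_atLeast0)
      ultimately show "xs \<in> permutations_of_set e" by (simp add: permutations_of_set_def)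
    qed
    show "permutations_of_set e \<subseteq> (\<lambda>v. map v [0..<r]) ` ?B"
    proof
      fix xs assume "xs \<in> permutations_of_set e"
      then have se: "set xs = e" and d: "distinct xs" by (auto simp: permutations_of_set_def)
      have len: "length xs = r" using distinct_card[OF d] se assms by simp
      define v where "v = (\<lambda>i. if i < r then xs ! i else undefined)"
      have "v \<in> tuples r V" using se len assms(1) by (auto simp: v_def tuples_def PiE_def extensional_def)
      moreover have "v ` {..<r} = e"
      proof -
        have "v ` {..<r} = (\<lambda>i. xs ! i) ` {..<r}" by (auto simp: v_def)
        also have "\<dots> = set xs" using len by (auto simp: set_conv_nth)
        finally show ?thesis using se by simp
      qed
      moreover have "map v [0..<r] = xs" using len by (auto simp: v_def intro: nth_equalityI)
      ultimately show "xs \<in> (\<lambda>v. map v [0..<r]) ` ?B" by force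
    qed
  qed
  have "card ?B = card (permutations_of_set e)" using card_image[OF inj] img by simp
  also have "\<dots> = fact r" using fe assms by simp
  finally show ?thesis .
qed

lemma finite_tuples: "finite V \<Longrightarrow> finite (tuples r V)"
  by (simp add: tuples_def finite_PiE)

lemma count_edges:
  assumes H: "uniform_hypergraph r V E" and U: "U \<subseteq> V"
  shows "card {v\<in>tuples r V. v`{..<r} \<in> E \<and> v`{..<r} \<subseteq> U} = fact r * edges_in E U"
proof -
  have fV: "finite V" using H by (simp add: uniform_hypergraph_def)
  let ?I = "{e\<in>E. e \<subseteq> U}"
  have EV: "E \<subseteq> Pow V" using H by (auto simp: uniform_hypergraph_def)
  have "?I \<subseteq> Pow V" using EV by blast
  then have fI: "finite ?I" by (rule finite_subset) (simp add: fV)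
  have eq: "{v\<in>tuples r V. v`{..<r} \<in> E \<and> v`{..<r} \<subseteq> U} = (\<Union>e\<in>?I. {v\<in>tuples r V. v`{..<r} = e})"
    by blast
  have "card (\<Union>e\<in>?I. {v\<in>tuples r V. v`{..<r} = e}) = (\<Sum>e\<in>?I. card {v\<in>tuples r V. v`{..<r} = e})"
  proof (rule card_UN_disjoint[OF fI])
    show "\<forall>e\<in>?I. finite {v\<in>tuples r V. v`{..<r} = e}" using fV by (simp add: finite_tuples)
    show "\<forall>e\<in>?I. \<forall>f\<in>?I. e \<noteq> f \<longrightarrow> {v\<in>tuples r V. v`{..<r} = e} \<inter> {v\<in>tuples r V. v`{..<r} = f} = {}"
      by blast
  qed
  also have "\<dots> = (\<Sum>e\<in>?I. fact r)"
  proof (rule sum.cong[OF refl])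
    fix e assume "e \<in> ?I"
    then have "e \<subseteq> V" "card e = r" using H by (auto simp: uniform_hypergraph_def)
    then show "card {v\<in>tuples r V. v`{..<r} = e} = fact r" using fV by (rule card_tuples_onto)
  qed
  also have "\<dots> = fact r * edges_in E U" by (simp add: edges_in_def)
  finally show ?thesis using eq by simp
qed

lemma prod_ind:
  fixes c :: real
  shows "(\<Prod>i<r. (if v i \<in> U then c else 0)) = (if v ` {..<r} \<subseteq> U then c ^ r else 0)"
proof (cases "v ` {..<r} \<subseteq> U")
  case True
  then have "(\<Prod>i<r. (if v i \<in> U then c else 0)) = (\<Prod>i<r. c)" by (intro prod.cong) auto
  then show ?thesis using True by simp
next
  case False
  then obtain i where "i < r" "v i \<notin> U" by auto
  then show ?thesis using False by (subst prod_zero) auto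
qed

lemma sum_ind:
  fixes a :: real
  assumes "finite S"
  shows "(\<Sum>v\<in>S. if P v then a else 0) = a * card {v\<in>S. P v}"
  using assms by (simp add: sum.If_cases Int_def)

lemma adj_test:
  fixes c :: real
  assumes H: "uniform_hypergraph r V E" and U: "U \<subseteq> V" and r: "1 \<le> r"
  shows "adj_map r V E (\<lambda>_. (\<lambda>v. if v \<in> U then c else 0)) = c ^ r * real r * real (edges_in E U)"
proof -
  have fV: "finite V" using H by (simp add: uniform_hypergraph_def)
  let ?S = "{v\<in>tuples r V. v ` {..<r} \<in> E}"
  have fS: "finite ?S" using fV by (simp add: finite_tuples)
  have "(\<Sum>v\<in>?S. \<Prod>i<r. (if v i \<in> U then c else 0)) = (\<Sum>v\<in>?S. if v ` {..<r} \<subseteq> U then c ^ r else 0)"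
    by (simp add: prod_ind)
  also have "\<dots> = c ^ r * card {v\<in>?S. v ` {..<r} \<subseteq> U}" using fS by (rule sum_ind)
  also have "{v\<in>?S. v ` {..<r} \<subseteq> U} = {v\<in>tuples r V. v`{..<r} \<in> E \<and> v`{..<r} \<subseteq> U}" by auto
  finally have s: "(\<Sum>v\<in>?S. \<Prod>i<r. (if v i \<in> U then c else 0)) = c ^ r * (fact r * edges_in E U)"
    using count_edges[OF H U] by simp
  have fr: "(fact r :: real) / fact (r - 1) = real r"
  proof -
    obtain k where k: "r = Suc k" using r by (cases r) auto
    show ?thesis unfolding k by simp
  qed
  show ?thesis unfolding adj_map_def s using fr by (simp add: field_simps)
qed

lemma J_test:
  fixes c :: real
  assumes fV: "finite V" and U: "U \<subseteq> V"
  shows "J_map r V (\<lambda>_. (\<lambda>v. if v \<in> U then c else 0)) = c ^ r * real (card U) ^ r"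
proof -
  have "J_map r V (\<lambda>_. (\<lambda>v. if v \<in> U then c else 0)) = (\<Sum>v\<in>tuples r V. if v ` {..<r} \<subseteq> U then c ^ r else 0)"
    unfolding J_map_def by (simp add: prod_ind)
  also have "\<dots> = c ^ r * card {v\<in>tuples r V. v ` {..<r} \<subseteq> U}" using fV by (intro sum_ind finite_tuples)
  also have "{v\<in>tuples r V. v ` {..<r} \<subseteq> U} = tuples r U" using U by (auto simp: tuples_def PiE_def)
  also have "card (tuples r U) = card U ^ r" by (simp add: tuples_def card_PiE)
  finally show ?thesis by simp
qed



lemma pnorm_le1:
  assumes p: "p > 0" and fV: "finite V" and x: "pnorm p V x = 1" and v: "v \<in> V"
  shows "\<bar>x v\<bar> \<le> 1"
proof -
  define s where "s = (\<Sum>w\<in>V. \<bar>x w\<bar> powr p)"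
  have s0: "0 \<le> s" unfolding s_def by (intro sum_nonneg) auto
  have sp: "s powr (1/p) = 1" using x by (simp add: pnorm_def s_def)
  have "s \<noteq> 0" using sp by auto
  have "s = (s powr (1/p)) powr p" using s0 p by (simp add: powr_powr)
  then have s1: "s = 1" using sp by simp
  have "\<bar>x v\<bar> powr p \<le> s" unfolding s_def using fV v
    by (intro member_le_sum) auto
  then have le: "\<bar>x v\<bar> powr p \<le> 1" using s1 by simp
  show ?thesis
  proof (rule ccontr)
    assume "\<not> \<bar>x v\<bar> \<le> 1"
    then have "1 < \<bar>x v\<bar> powr p" using p by (intro gr_one_powr) auto
    then show False using le by simp
  qed
qed

lemma prod_abs_le1:
  fixes f :: "nat \<Rightarrow> real"
  assumes "\<And>i. i < r \<Longrightarrow> \<bar>f i\<bar> \<le> 1"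
  shows "\<bar>\<Prod>i<r. f i\<bar> \<le> 1"
  unfolding abs_prod using assms by (intro prod_le_1) auto

lemma nam_bound:
  assumes fV: "finite V" and b: "\<And>i v. i < r \<Longrightarrow> v \<in> V \<Longrightarrow> \<bar>xs i v\<bar> \<le> 1"
  shows "\<bar>norm_adj_map r V E xs\<bar>
     \<le> 1 / fact (r - 1) * real (card (tuples r V)) + \<bar>real r * real (card E) / real (card V) ^ r\<bar> * real (card (tuples r V))"
proof -
  let ?T = "tuples r V"
  let ?S = "{v\<in>tuples r V. v ` {..<r} \<in> E}"
  have fT: "finite ?T" using fV by (simp add: finite_tuples)
  have pb: "\<bar>\<Prod>i<r. xs i (v i)\<bar> \<le> 1" if "v \<in> ?T" for v
  proof (rule prod_abs_le1)
    fix i assume "i < r"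
    moreover then have "v i \<in> V" using that by (auto simp: tuples_def PiE_def Pi_def)
    ultimately show "\<bar>xs i (v i)\<bar> \<le> 1" by (rule b)
  qed
  have sS: "\<bar>\<Sum>v\<in>?S. \<Prod>i<r. xs i (v i)\<bar> \<le> real (card ?T)"
  proof -
    have "\<bar>\<Sum>v\<in>?S. \<Prod>i<r. xs i (v i)\<bar> \<le> (\<Sum>v\<in>?S. \<bar>\<Prod>i<r. xs i (v i)\<bar>)" by (rule sum_abs)
    also have "\<dots> \<le> real (card ?S) * 1" by (rule sum_bounded_above) (use pb in auto)
    also have "card ?S \<le> card ?T" using fT by (intro card_mono) auto
    finally show ?thesis by simp
  qed
  have sT: "\<bar>J_map r V xs\<bar> \<le> real (card ?T)"
  proof -
    have "\<bar>J_map r V xs\<bar> \<le> (\<Sum>v\<in>?T. \<bar>\<Prod>i<r. xs i (v i)\<bar>)" unfolding J_map_def by (rule sum_abs)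
    also have "\<dots> \<le> real (card ?T) * 1" by (rule sum_bounded_above) (use pb in auto)
    finally show ?thesis by simp
  qed
  have a: "\<bar>adj_map r V E xs\<bar> \<le> 1 / fact (r - 1) * real (card ?T)"
    unfolding adj_map_def abs_mult using sS by (simp add: divide_right_mono)
  have j: "\<bar>(real r * real (card E) / real (card V) ^ r) * J_map r V xs\<bar>
      \<le> \<bar>real r * real (card E) / real (card V) ^ r\<bar> * real (card ?T)"
    unfolding abs_mult using sT by (intro mult_left_mono) auto
  show ?thesis unfolding norm_adj_map_def using a j by linarith
qed

definition testv :: "real \<Rightarrow> nat set \<Rightarrow> nat \<Rightarrow> real" where
  "testv p U = (\<lambda>v. if v \<in> U then real (card U) powr (-1/p) else 0)"

lemma testv_norm:
  assumes p: "p > 0" and fV: "finite V" and U: "U \<subseteq> V" "U \<noteq> {}"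
  shows "pnorm p V (testv p U) = 1"
proof -
  have fU: "finite U" using fV U finite_subset by auto
  have u0: "0 < real (card U)" using fU U card_gt_0_iff by auto
  let ?c = "real (card U) powr (-1/p)"
  have "(\<Sum>v\<in>V. \<bar>testv p U v\<bar> powr p) = (\<Sum>v\<in>V. if v \<in> U then ?c powr p else 0)"
    by (intro sum.cong) (auto simp: testv_def)
  also have "\<dots> = ?c powr p * card {v\<in>V. v \<in> U}" using fV by (rule sum_ind)
  also have "{v\<in>V. v \<in> U} = U" using U by auto
  also have "?c powr p = real (card U) powr (-1)" using p by (simp add: powr_powr)
  also have "real (card U) powr (-1) * real (card U) = 1" using u0 by (simp add: powr_minus)
  finally show ?thesis by (simp add: pnorm_def)
qed

lemma testv_sigma:
  assumes H: "uniform_hypergraph r V E" and r: "1 \<le> r" and U: "U \<subseteq> V"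
  shows "norm_adj_map r V E (\<lambda>_. testv p U) = (real (card U) powr (-1/p)) ^ r * real r *
     (real (edges_in E U) - real (card E) * real (card U) ^ r / real (card V) ^ r)"
proof -
  have fV: "finite V" using H by (simp add: uniform_hypergraph_def)
  show ?thesis unfolding norm_adj_map_def testv_def
    using adj_test[OF H U r, of "real (card U) powr (-1/p)"] J_test[OF fV U, of r "real (card U) powr (-1/p)"]
    by (simp add: algebra_simps)
qed



theorem lemma1p9:
  "\<forall>r::nat. r \<ge> 2 \<longrightarrow> (\<exists>C::real. C > 0 \<and>
     (\<forall>(V::nat set) (E::nat set set) (p::real).
        uniform_hypergraph r V E \<and> V \<noteq> {} \<and> p > 0 \<longrightarrow>
          real (card V) powr (real r / p) * lambda2 p r V E
            \<ge> real r * disc_plus r V E - C * avg_degree r V E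
        \<and> real (card V) powr (real r / p) * mu p r V E
            \<ge> real r * disc r V E - C * avg_degree r V E))"
proof (intro allI impI)
  fix r :: nat assume r2: "2 \<le> r"
  then have r1: "1 \<le> r" by simp
  show "\<exists>C::real. C > 0 \<and>
     (\<forall>(V::nat set) (E::nat set set) (p::real).
        uniform_hypergraph r V E \<and> V \<noteq> {} \<and> p > 0 \<longrightarrow>
          real (card V) powr (real r / p) * lambda2 p r V E
            \<ge> real r * disc_plus r V E - C * avg_degree r V E
        \<and> real (card V) powr (real r / p) * mu p r V E
            \<ge> real r * disc r V E - C * avg_degree r V E)"
  proof (intro exI[of _ "real r * real r"] conjI allI impI)
    show "0 < real r * real r" using r2 by simp
    fix V :: "nat set" and E :: "nat set set" and p :: real
    assume A: "uniform_hypergraph r V E \<and> V \<noteq> {} \<and> p > 0"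
    then have H: "uniform_hypergraph r V E" and Vne: "V \<noteq> {}" and p: "p > 0" by auto
    have fV: "finite V" using H by (simp add: uniform_hypergraph_def)
    define n where "n = card V"
    have n0: "0 < real n" using fV Vne by (simp add: n_def card_gt_0_iff)
    define br where "br U = real (edges_in E U) - real (card E) * real (card U) ^ r / real n ^ r" for U
    define K where "K = 1 / fact (r - 1) * real (card (tuples r V)) + \<bar>real r * real (card E) / real (card V) ^ r\<bar> * real (card (tuples r V))"
    define A1 where "A1 = {x. pnorm p V x = 1}"
    define A2 where "A2 = {xs. \<forall>i<r. pnorm p V (xs i) = 1}"
    define N where "N = real n powr (real r / p)"
    have N0: "0 \<le> N" by (simp add: N_def)
    have lam: "lambda2 p r V E = (SUP x\<in>A1. norm_adj_map r V E (\<lambda>_. x))"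
      by (simp add: lambda2_def A1_def)
    have muu: "mu p r V E = (SUP xs\<in>A2. \<bar>norm_adj_map r V E xs\<bar>)"
      by (simp add: mu_def A2_def)
    have bdd1: "bdd_above ((\<lambda>x. norm_adj_map r V E (\<lambda>_. x)) ` A1)"
    proof (rule bdd_aboveI2)
      fix x assume "x \<in> A1"
      then have "\<And>i v. i < r \<Longrightarrow> v \<in> V \<Longrightarrow> \<bar>x v\<bar> \<le> 1"
        using pnorm_le1[OF p fV] by (auto simp: A1_def)
      then have "\<bar>norm_adj_map r V E (\<lambda>_. x)\<bar> \<le> K" unfolding K_def using fV by (intro nam_bound) auto
      then show "norm_adj_map r V E (\<lambda>_. x) \<le> K" by simp
    qed
    have bdd2: "bdd_above ((\<lambda>xs. \<bar>norm_adj_map r V E xs\<bar>) ` A2)"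
    proof (rule bdd_aboveI2)
      fix xs assume "xs \<in> A2"
      then have "\<And>i v. i < r \<Longrightarrow> v \<in> V \<Longrightarrow> \<bar>xs i v\<bar> \<le> 1"
        using pnorm_le1[OF p fV] by (auto simp: A2_def)
      then show "\<bar>norm_adj_map r V E xs\<bar> \<le> K" unfolding K_def using fV by (intro nam_bound) auto
    qed
    have key: "N * norm_adj_map r V E (\<lambda>_. testv p U) = (real n / real (card U)) powr (real r / p) * real r * br U
          \<and> norm_adj_map r V E (\<lambda>_. testv p U) \<le> lambda2 p r V E
          \<and> \<bar>norm_adj_map r V E (\<lambda>_. testv p U)\<bar> \<le> mu p r V E" if U: "U \<subseteq> V" "U \<noteq> {}" for U
    proof (intro conjI)
      have fU: "finite U" using fV U finite_subset by auto
      have u0: "0 < real (card U)" using fU U card_gt_0_iff by auto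
      have "N * (real (card U) powr (-1/p)) ^ r = (real n / real (card U)) powr (real r / p)"
      proof -
        have "(real (card U) powr (-1/p)) ^ r = real (card U) powr (real r * (-1/p))"
          using u0 by (simp add: powr_power)
        also have "\<dots> = inverse (real (card U) powr (real r / p))"
          by (simp add: powr_minus[symmetric])
        finally have X: "(real (card U) powr (-1/p)) ^ r = inverse (real (card U) powr (real r / p))" .
        have "(real n / real (card U)) powr (real r / p) = real n powr (real r / p) / real (card U) powr (real r / p)"
          by (rule powr_divide)
        then show ?thesis using X by (simp only: N_def divide_inverse)
      qed
      then show "N * norm_adj_map r V E (\<lambda>_. testv p U) = (real n / real (card U)) powr (real r / p) * real r * br U"
        unfolding testv_sigma[OF H r1 U(1)] br_def n_def by (simp add: mult.assoc[symmetric])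
      have tA1: "testv p U \<in> A1" using testv_norm[OF p fV U] by (simp add: A1_def)
      show "norm_adj_map r V E (\<lambda>_. testv p U) \<le> lambda2 p r V E"
        unfolding lam by (rule cSUP_upper[OF tA1 bdd1])
      have tA2: "(\<lambda>_. testv p U) \<in> A2" using testv_norm[OF p fV U] by (simp add: A2_def)
      show "\<bar>norm_adj_map r V E (\<lambda>_. testv p U)\<bar> \<le> mu p r V E"
        unfolding muu by (rule cSUP_upper[OF tA2 bdd2])
    qed
    have brV: "br V = 0"
    proof -
      have "{e\<in>E. e \<subseteq> V} = E" using H by (auto simp: uniform_hypergraph_def)
      then show ?thesis using n0 by (simp add: br_def edges_in_def n_def)
    qed
    have sV: "norm_adj_map r V E (\<lambda>_. testv p V) = 0"
    proof -
      have "N * norm_adj_map r V E (\<lambda>_. testv p V) = 0" using key[OF order_refl Vne] brV by simp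
      moreover have "N > 0" using n0 by (simp add: N_def)
      ultimately show ?thesis by simp
    qed
    have lam0: "0 \<le> lambda2 p r V E" using key[OF order_refl Vne] sV by simp
    have mu0: "0 \<le> mu p r V E" using key[OF order_refl Vne] sV by simp
    have br0: "br {} = 0"
    proof -
      have emp: "{e\<in>E. e \<subseteq> {}} = {}" using H r1 by (auto simp: uniform_hypergraph_def)
      have "edges_in E {} = 0" unfolding edges_in_def emp by simp
      then show ?thesis using r1 by (simp add: br_def)
    qed
    have L1: "real r * br U \<le> N * lambda2 p r V E" if U: "U \<subseteq> V" for U
    proof (cases "U = {}")
      case True then show ?thesis using br0 N0 lam0 by simp
    next
      case False
      note k = key[OF U False]
      show ?thesis
      proof (cases "0 \<le> br U")
        case True
        have f1: "1 \<le> (real n / real (card U)) powr (real r / p)"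
        proof (rule ge_one_powr_ge_zero)
          have "card U \<le> n" using U fV by (simp add: n_def card_mono)
          moreover have "0 < card U" using False fV U finite_subset card_gt_0_iff by blast
          ultimately show "1 \<le> real n / real (card U)" by simp
          show "0 \<le> real r / p" using p by simp
        qed
        have "real r * br U \<le> (real n / real (card U)) powr (real r / p) * (real r * br U)"
          using mult_right_mono[OF f1, of "real r * br U"] True by simp
        also have "\<dots> = N * norm_adj_map r V E (\<lambda>_. testv p U)" using k by simp
        also have "\<dots> \<le> N * lambda2 p r V E" by (rule mult_left_mono[OF conjunct1[OF conjunct2[OF k]] N0])
        finally show ?thesis .
      next
        case False
        then have "real r * br U \<le> 0" using r1 by (simp add: mult_nonneg_nonpos)
        also have "0 \<le> N * lambda2 p r V E" using N0 lam0 by simp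
        finally show ?thesis .
      qed
    qed
    have L2: "real r * \<bar>br U\<bar> \<le> N * mu p r V E" if U: "U \<subseteq> V" for U
    proof (cases "U = {}")
      case True then show ?thesis using br0 N0 mu0 by simp
    next
      case False
      note k = key[OF U False]
      have f1: "1 \<le> (real n / real (card U)) powr (real r / p)"
      proof (rule ge_one_powr_ge_zero)
        have "card U \<le> n" using U fV by (simp add: n_def card_mono)
        moreover have "0 < card U" using False fV U finite_subset card_gt_0_iff by blast
        ultimately show "1 \<le> real n / real (card U)" by simp
        show "0 \<le> real r / p" using p by simp
      qed
      have "real r * \<bar>br U\<bar> \<le> (real n / real (card U)) powr (real r / p) * (real r * \<bar>br U\<bar>)"
        using mult_right_mono[OF f1, of "real r * \<bar>br U\<bar>"] by simp
      also have "\<dots> = \<bar>N * norm_adj_map r V E (\<lambda>_. testv p U)\<bar>" using k by (simp add: abs_mult)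
      also have "\<dots> = N * \<bar>norm_adj_map r V E (\<lambda>_. testv p U)\<bar>" using N0 by (simp add: abs_mult)
      also have "\<dots> \<le> N * mu p r V E" by (rule mult_left_mono[OF conjunct2[OF conjunct2[OF k]] N0])
      finally show ?thesis .
    qed
    have L3: "\<bar>disc_set r V E U - br U\<bar> \<le> real r * real r * real (card E) / real n" if U: "U \<subseteq> V" for U
    proof (cases "E = {}")
      case True then show ?thesis by (simp add: disc_set_def br_def edges_in_def edge_density_def)
    next
      case False
      then obtain e where e: "e \<in> E" by auto
      then have "e \<subseteq> V" "card e = r" using H by (auto simp: uniform_hypergraph_def)
      then have rn: "r \<le> n" using fV by (metis card_mono n_def)
      have un: "card U \<le> n" using U fV by (simp add: n_def card_mono)
      have "disc_set r V E U - br U = real (card E) * (real (card U) ^ r / real n ^ r - real (card U choose r) / real (n choose r))"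
        by (simp add: disc_set_def br_def edge_density_def n_def algebra_simps)
      also have "\<bar>\<dots>\<bar> = real (card E) * \<bar>real (card U choose r) / real (n choose r) - real (card U) ^ r / real n ^ r\<bar>"
        by (simp add: abs_mult abs_minus_commute)
      also have "\<dots> \<le> real (card E) * (real r * real r / real n)"
        using binom_ratio[OF r1 rn un] by (intro mult_left_mono) auto
      finally show ?thesis by (simp add: mult.commute)
    qed
    have avg: "real r * real r * avg_degree r V E = real r * (real r * real r * real (card E) / real n)"
      by (simp add: avg_degree_def n_def)
    have fin: "finite (Pow V)" using fV by simp
    show "real r * disc_plus r V E - real r * real r * avg_degree r V E \<le> real (card V) powr (real r / p) * lambda2 p r V E"
    proof -
      have "disc_plus r V E \<in> disc_set r V E ` Pow V" unfolding disc_plus_def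
        using fin by (intro Max_in) auto
      then obtain U where U: "U \<subseteq> V" and dp: "disc_plus r V E = disc_set r V E U" by auto
      have X: "disc_set r V E U - br U \<le> real r * real r * real (card E) / real n" using L3[OF U] by simp
      have "real r * (disc_set r V E U - br U) \<le> real r * (real r * real r * real (card E) / real n)"
        by (rule mult_left_mono[OF X]) simp
      then have "real r * disc_set r V E U - real r * (real r * real r * real (card E) / real n) \<le> real r * br U"
        by (simp only: right_diff_distrib)
      then show ?thesis using L1[OF U] dp avg by (simp add: N_def n_def)
    qed
    show "real r * disc r V E - real r * real r * avg_degree r V E \<le> real (card V) powr (real r / p) * mu p r V E"
    proof -
      have "disc r V E \<in> (\<lambda>U. \<bar>disc_set r V E U\<bar>) ` Pow V" unfolding disc_def
        using fin by (intro Max_in) auto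
      then obtain U where U: "U \<subseteq> V" and dp: "disc r V E = \<bar>disc_set r V E U\<bar>" by auto
      have X: "\<bar>disc_set r V E U\<bar> - \<bar>br U\<bar> \<le> real r * real r * real (card E) / real n" using L3[OF U] by simp
      have "real r * (\<bar>disc_set r V E U\<bar> - \<bar>br U\<bar>) \<le> real r * (real r * real r * real (card E) / real n)"
        by (rule mult_left_mono[OF X]) simp
      then have "real r * \<bar>disc_set r V E U\<bar> - real r * (real r * real r * real (card E) / real n) \<le> real r * \<bar>br U\<bar>"
        by (simp only: right_diff_distrib)
      then show ?thesis using L2[OF U] dp avg by (simp add: N_def n_def)
    qed
  qed
qed

end
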